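(* Let $\mathbb{X}$ be a real Banach space and let $f\in \mathbb{X}^{**}$ be weak$^*$ continuous. Let $\mathbb{Y}$ be a linear subspace of $\mathbb{X}^{**}$ such that each member of $\mathbb{Y}$ is weak$^*$ continuous and $f\notin \mathbb{Y}$. Let $g_0\in \mathbb{Y}$. Then $g_0$ is a best approximation to $f$ out of $\mathbb{Y}$ if and only if for every finite-dimensional subspace $\mathbb{Z}$ of $\mathbb{Y}$ containing $g_0$, $$\Big(\bigcap_{g\in \mathbb{Z}}\mathcal{N}(g)\Big)\cap M_{f-g_0} \neq \emptyset.$$
   Context: A functional in $\mathbb{X}^{**}$ is weak$^*$ continuous (as a functional on $\mathbb{X}^*$) iff it equals $\psi(x)$ for some $x\in\mathbb{X}$, $\psi$ the canonical embedding. For $h\in\mathbb{X}^{**}$: $\mathcal{N}(h)=\{x^*\in\mathbb{X}^*:h(x^* )=0\}$ and $M_h=\{x^*\in S_{\mathbb{X}^*}: |h(x^* )|=\|h\|\}$, where $S_{\mathbb{X}^*}$ is the unit sphere of $\mathbb{X}^*$. An element $g_0\in\mathbb{Y}$ is a best approximation to $f$ out of $\mathbb{Y}$ if $\|f-g_0\|=\inf\{\|f-g\|: g\in\mathbb{Y}\}$. *)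

theory Defs
  imports "HOL-Analysis.Analysis"
begin

definition weak_star_topology :: "('a::real_normed_vector \<Rightarrow>\<^sub>L real) topology" where
  "weak_star_topology =
     topology_generated_by {{\<phi>. blinfun_apply \<phi> x \<in> U} | x U. open (U::real set)}"

definition weak_star_continuous :: "(('a::real_normed_vector \<Rightarrow>\<^sub>L real) \<Rightarrow>\<^sub>L real) \<Rightarrow> bool" where
  "weak_star_continuous h \<longleftrightarrow> continuous_map weak_star_topology euclideanreal (blinfun_apply h)"

definition null_space :: "(('a::real_normed_vector \<Rightarrow>\<^sub>L real) \<Rightarrow>\<^sub>L real) \<Rightarrow> ('a \<Rightarrow>\<^sub>L real) set" where
  "null_space h = {xs. blinfun_apply h xs = 0}"

definition norming_set :: "(('a::real_normed_vector \<Rightarrow>\<^sub>L real) \<Rightarrow>\<^sub>L real) \<Rightarrow> ('a \<Rightarrow>\<^sub>L real) set" where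
  "norming_set h = {xs \<in> sphere 0 1. \<bar>blinfun_apply h xs\<bar> = norm h}"

definition best_approximation :: "'b::real_normed_vector \<Rightarrow> 'b set \<Rightarrow> 'b \<Rightarrow> bool" where
  "best_approximation f Y g0 \<longleftrightarrow> g0 \<in> Y \<and> norm (f - g0) = Inf {norm (f - g) | g. g \<in> Y}"

end

theory Submission
  imports Defs
begin

lemma hb_graph:
  fixes G0 :: "('a::real_normed_vector \<times> real) set"
  assumes sub0: "subspace G0"
    and fun0: "\<forall>x y z. (x,y)\<in>G0 \<longrightarrow> (x,z)\<in>G0 \<longrightarrow> y = z"
    and bd0: "\<forall>(x,y)\<in>G0. y \<le> C * norm x"
    and C: "C \<ge> 0"
  shows "\<exists>F::('a \<Rightarrow>\<^sub>L real). (\<forall>(x,y)\<in>G0. blinfun_apply F x = y) \<and> norm F \<le> C"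
proof -
  define A where "A = {G :: ('a \<times> real) set. subspace G \<and> G0 \<subseteq> G \<and>
      (\<forall>x y z. (x,y)\<in>G \<longrightarrow> (x,z)\<in>G \<longrightarrow> y = z) \<and> (\<forall>(x,y)\<in>G. y \<le> C * norm x)}"
  have G0A: "G0 \<in> A" using assms unfolding A_def by auto
  have "\<forall>Ch\<in>chains A. \<exists>U\<in>A. \<forall>X\<in>Ch. X \<subseteq> U"
  proof
    fix Ch assume ch: "Ch \<in> chains A"
    hence chA: "Ch \<subseteq> A" and chn: "\<And>X Y. X \<in> Ch \<Longrightarrow> Y \<in> Ch \<Longrightarrow> X \<subseteq> Y \<or> Y \<subseteq> X"
      unfolding chains_def chain_subset_def by auto
    show "\<exists>U\<in>A. \<forall>X\<in>Ch. X \<subseteq> U"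
    proof (cases "Ch = {}")
      case True thus ?thesis using G0A by auto
    next
      case False
      then obtain X0 where X0: "X0 \<in> Ch" by auto
      have "\<Union>Ch \<in> A" unfolding A_def
      proof (intro CollectI conjI allI impI)
        show "subspace (\<Union>Ch)" unfolding subspace_def
        proof (intro conjI ballI allI)
          show "0 \<in> \<Union>Ch" using X0 chA subspace_0 unfolding A_def by blast
        next
          fix a b assume "a \<in> \<Union>Ch" "b \<in> \<Union>Ch"
          then obtain X Y where "X \<in> Ch" "Y \<in> Ch" "a \<in> X" "b \<in> Y" by auto
          have "subspace X" "subspace Y" using \<open>X \<in> Ch\<close> \<open>Y \<in> Ch\<close> chA unfolding A_def by auto
          with chn[of X Y] \<open>X \<in> Ch\<close> \<open>Y \<in> Ch\<close> \<open>a \<in> X\<close> \<open>b \<in> Y\<close>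
          show "a + b \<in> \<Union>Ch" by (meson UnionI subsetD subspace_add)
        next
          fix c :: real and a assume "a \<in> \<Union>Ch"
          then obtain X where "X \<in> Ch" "a \<in> X" by auto
          moreover have "subspace X" using \<open>X \<in> Ch\<close> chA unfolding A_def by auto
          ultimately show "c *\<^sub>R a \<in> \<Union>Ch" by (meson UnionI subspace_scale)
        qed
        have "G0 \<subseteq> X0" using X0 chA unfolding A_def by auto
        thus "G0 \<subseteq> \<Union>Ch" using X0 by blast
        fix x y z assume "(x,y) \<in> \<Union>Ch" "(x,z) \<in> \<Union>Ch"
        then obtain X Y where "X \<in> Ch" "Y \<in> Ch" "(x,y) \<in> X" "(x,z) \<in> Y" by auto
        with chn[of X Y] chA show "y = z" unfolding A_def by blast
      next
        show "\<forall>(x,y)\<in>\<Union>Ch. y \<le> C * norm x" using chA unfolding A_def by blast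
      qed
      thus ?thesis by auto
    qed
  qed
  from Zorn_Lemma2[OF this] obtain M where MA: "M \<in> A" and Mmax: "\<forall>X\<in>A. M \<subseteq> X \<longrightarrow> X = M"
    by blast
  have Msub: "subspace M" and G0M: "G0 \<subseteq> M"
    and Mfun: "\<And>x y z. (x,y)\<in>M \<Longrightarrow> (x,z)\<in>M \<Longrightarrow> y = z"
    and Mbd: "\<And>x y. (x,y)\<in>M \<Longrightarrow> y \<le> C * norm x"
    using MA unfolding A_def by auto
  have Madd: "(x + x', y + y') \<in> M" if "(x,y)\<in>M" "(x',y')\<in>M" for x y x' y'
    using subspace_add[OF Msub that] by simp
  have Mscale: "(a *\<^sub>R x, a * y) \<in> M" if "(x,y)\<in>M" for a x y
    using subspace_scale[OF Msub that, of a] by simp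
  have M0: "(0,0) \<in> M" using subspace_0[OF Msub] by (simp add: zero_prod_def)
  have total: "\<exists>y. (x1,y) \<in> M" for x1
  proof (rule ccontr)
    assume nx: "\<not> (\<exists>y. (x1,y) \<in> M)"
    define L where "L = {y - C * norm (x - x1) | x y. (x,y)\<in>M}"
    define R where "R = {C * norm (x + x1) - y | x y. (x,y)\<in>M}"
    have LR: "l \<le> r" if lL: "l \<in> L" and rR: "r \<in> R" for l r
    proof -
      obtain x y where l: "l = y - C * norm (x - x1)" "(x,y)\<in>M"
        using lL unfolding L_def by blast
      obtain z w where r: "r = C * norm (z + x1) - w" "(z,w)\<in>M"
        using rR unfolding R_def by blast
      have "y + w \<le> C * norm (x + z)" using Mbd[OF Madd[OF l(2) r(2)]] .
      also have "norm (x + z) \<le> norm (x - x1) + norm (z + x1)"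
        using norm_triangle_ineq[of "x - x1" "z + x1"] by simp
      hence "C * norm (x + z) \<le> C * norm (x - x1) + C * norm (z + x1)"
        using C by (metis distrib_left mult_left_mono)
      finally show ?thesis using l r by simp
    qed
    have Lne: "L \<noteq> {}" using M0 unfolding L_def by auto
    have Rne: "R \<noteq> {}" using M0 unfolding R_def by auto
    define c where "c = Sup L"
    have bddL: "bdd_above L" using Rne LR by (meson bdd_above_def equals0I)
    have cL: "l \<le> c" if "l \<in> L" for l using cSup_upper[OF that bddL] c_def by simp
    have cR: "c \<le> r" if "r \<in> R" for r using cSup_least[OF Lne] LR that c_def by blast
    define M' where "M' = {(x + t *\<^sub>R x1, y + t * c) | x y t. (x,y)\<in>M}"
    have MM': "M \<subseteq> M'" unfolding M'_def by force
    have x1M': "(x1, c) \<in> M'" unfolding M'_def using M0 by force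
    have "M' \<in> A" unfolding A_def
    proof (intro CollectI conjI allI impI)
      show "subspace M'" unfolding subspace_def
      proof (intro conjI ballI allI)
        show "0 \<in> M'" using MM' M0 by (auto simp: zero_prod_def)
      next
        fix a b assume "a \<in> M'" "b \<in> M'"
        then obtain x y t x' y' t' where a: "a = (x + t *\<^sub>R x1, y + t * c)" "(x,y)\<in>M"
          and b: "b = (x' + t' *\<^sub>R x1, y' + t' * c)" "(x',y')\<in>M" unfolding M'_def by blast
        have "a + b = ((x + x') + (t + t') *\<^sub>R x1, (y + y') + (t + t') * c)"
          using a b by (simp add: algebra_simps scaleR_add_left)
        thus "a + b \<in> M'" unfolding M'_def using Madd[OF a(2) b(2)] by blast
      next
        fix s :: real and a assume "a \<in> M'"
        then obtain x y t where a: "a = (x + t *\<^sub>R x1, y + t * c)" "(x,y)\<in>M"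
          unfolding M'_def by blast
        have "s *\<^sub>R a = (s *\<^sub>R x + (s * t) *\<^sub>R x1, s * y + (s * t) * c)"
          using a by (simp add: algebra_simps)
        thus "s *\<^sub>R a \<in> M'" unfolding M'_def using Mscale[OF a(2)] by blast
      qed
      show "G0 \<subseteq> M'" using G0M MM' by auto
      fix x y z assume "(x,y) \<in> M'" "(x,z) \<in> M'"
      then obtain u v t u' v' t' where a: "x = u + t *\<^sub>R x1" "y = v + t * c" "(u,v)\<in>M"
          and b: "x = u' + t' *\<^sub>R x1" "z = v' + t' * c" "(u',v')\<in>M" unfolding M'_def by blast
      show "y = z"
      proof (cases "t = t'")
        case True
        hence "u = u'" using a b by simp
        thus ?thesis using Mfun[OF a(3)] b True a by simp
      next
        case False
        have "(u' - u, v' - v) \<in> M" using Madd[OF b(3) Mscale[OF a(3), of "-1"]] by simp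
        from Mscale[OF this, of "1/(t - t')"]
        have "((1/(t - t')) *\<^sub>R (u' - u), (1/(t - t')) * (v' - v)) \<in> M" .
        moreover have "(1/(t - t')) *\<^sub>R (u' - u) = x1"
        proof -
          have "u' - u = (t - t') *\<^sub>R x1" using a(1) b(1) by (simp add: algebra_simps)
          thus ?thesis using False by simp
        qed
        ultimately show ?thesis using nx by auto
      qed
    next
      show "\<forall>(x,y)\<in>M'. y \<le> C * norm x"
      proof (clarify)
        fix a b assume "(a,b) \<in> M'"
        then obtain x y t where xy: "(x,y)\<in>M" and ab: "a = x + t *\<^sub>R x1" "b = y + t * c"
          unfolding M'_def by blast
        have "y + t * c \<le> C * norm (x + t *\<^sub>R x1)"
        proof (cases "t = 0")
          case True thus ?thesis using Mbd[OF xy] by simp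
        next
          case False
          show ?thesis
          proof (cases "t > 0")
            case True
            have "((1/t) *\<^sub>R x, (1/t) * y) \<in> M" using Mscale[OF xy] .
            hence "c \<le> C * norm ((1/t) *\<^sub>R x + x1) - (1/t) * y" using cR unfolding R_def by blast
            hence "t * c \<le> t * (C * norm ((1/t) *\<^sub>R x + x1) - (1/t) * y)"
              using True by (simp add: mult_left_mono)
            also have "\<dots> = C * (t * norm ((1/t) *\<^sub>R x + x1)) - y" using True by (simp add: algebra_simps)
            also have "t * norm ((1/t) *\<^sub>R x + x1) = norm (t *\<^sub>R ((1/t) *\<^sub>R x + x1))"
              using True by simp
            also have "t *\<^sub>R ((1/t) *\<^sub>R x + x1) = x + t *\<^sub>R x1" using True by (simp add: algebra_simps)
            finally show ?thesis by simp
          next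
            case False
            define s where "s = - t"
            have s: "s > 0" using False \<open>t \<noteq> 0\<close> s_def by simp
            have "((1/s) *\<^sub>R x, (1/s) * y) \<in> M" using Mscale[OF xy] .
            hence "(1/s) * y - C * norm ((1/s) *\<^sub>R x - x1) \<le> c" using cL unfolding L_def by blast
            hence "s * ((1/s) * y - C * norm ((1/s) *\<^sub>R x - x1)) \<le> s * c"
              using s by (simp add: mult_left_mono)
            hence "y - C * (s * norm ((1/s) *\<^sub>R x - x1)) \<le> s * c" using s by (simp add: algebra_simps)
            also have "s * norm ((1/s) *\<^sub>R x - x1) = norm (s *\<^sub>R ((1/s) *\<^sub>R x - x1))"
              using s by simp
            also have "s *\<^sub>R ((1/s) *\<^sub>R x - x1) = x + t *\<^sub>R x1" using s s_def by (simp add: algebra_simps)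
            finally show ?thesis using s_def by simp
          qed
        qed
        thus "b \<le> C * norm a" using ab by simp
      qed
    qed
    with Mmax MM' have "M' = M" by blast
    with x1M' nx show False by auto
  qed
  define F0 where "F0 x = (THE y. (x,y) \<in> M)" for x
  have F0M: "(x, F0 x) \<in> M" for x
  proof -
    obtain y where "(x,y) \<in> M" using total by blast
    hence "(THE y. (x,y) \<in> M) = y" using Mfun by blast
    thus ?thesis using \<open>(x,y)\<in>M\<close> F0_def by simp
  qed
  have F0eq: "F0 x = y" if "(x,y) \<in> M" for x y using Mfun[OF F0M that] .
  have F0add: "F0 (x + y) = F0 x + F0 y" for x y using F0eq[OF Madd[OF F0M F0M]] .
  have F0scale: "F0 (a *\<^sub>R x) = a * F0 x" for a x using F0eq[OF Mscale[OF F0M]] .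
  have F0bd: "\<bar>F0 x\<bar> \<le> C * norm x" for x
  proof -
    have "F0 x \<le> C * norm x" using Mbd[OF F0M] .
    moreover have "F0 (-x) \<le> C * norm (-x)" using Mbd[OF F0M] .
    moreover have "F0 (-x) = - F0 x" using F0scale[of "-1" x] by simp
    ultimately show ?thesis by simp
  qed
  have bl: "bounded_linear F0"
    by (rule bounded_linear_intro[where K = C]) (auto simp: F0add F0scale F0bd mult.commute)
  define F where "F = Blinfun F0"
  have FF0: "blinfun_apply F = F0" using bounded_linear_Blinfun_apply[OF bl] F_def by simp
  have "norm F \<le> C" using norm_blinfun_bound[OF C, of F] F0bd FF0 by simp
  moreover have "\<forall>(x,y)\<in>G0. F x = y" using G0M F0eq FF0 by auto
  ultimately show ?thesis by blast
qed

lemma ev_span: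
  fixes h :: "('a::real_normed_vector \<Rightarrow>\<^sub>L real) \<Rightarrow> real"
  assumes lin: "linear h" and fin: "finite F"
  shows "subspace S \<Longrightarrow> (\<forall>\<phi>\<in>S. (\<forall>x\<in>F. blinfun_apply \<phi> x = 0) \<longrightarrow> h \<phi> = 0)
     \<Longrightarrow> \<exists>x0. \<forall>\<phi>\<in>S. h \<phi> = blinfun_apply \<phi> x0"
  using fin
proof (induction F arbitrary: S)
  case empty
  thus ?case by (intro exI[of _ 0]) simp
next
  case (insert a F S)
  define S' where "S' = S \<inter> {\<phi>. blinfun_apply \<phi> a = 0}"
  have "subspace {\<phi>::'a \<Rightarrow>\<^sub>L real. blinfun_apply \<phi> a = 0}"
    unfolding subspace_def by (simp add: blinfun.add_left blinfun.scaleR_left)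
  hence sS': "subspace S'" using insert.prems(1) S'_def subspace_inter by blast
  have "\<forall>\<phi>\<in>S'. (\<forall>x\<in>F. blinfun_apply \<phi> x = 0) \<longrightarrow> h \<phi> = 0"
    using insert.prems(2) S'_def by auto
  from insert.IH[OF sS' this] obtain x1 where x1: "\<forall>\<phi>\<in>S'. h \<phi> = blinfun_apply \<phi> x1" by blast
  show ?case
  proof (cases "\<forall>\<phi>\<in>S. blinfun_apply \<phi> a = 0")
    case True
    hence "S' = S" unfolding S'_def by auto
    thus ?thesis using x1 by blast
  next
    case False
    then obtain v0 where v0: "v0 \<in> S" "blinfun_apply v0 a \<noteq> 0" by blast
    define v where "v = (1 / blinfun_apply v0 a) *\<^sub>R v0"
    have vS: "v \<in> S" using v0 insert.prems(1) v_def subspace_scale by blast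
    have va: "blinfun_apply v a = 1" using v0 v_def by (simp add: blinfun.scaleR_left)
    define k where "k = h v - blinfun_apply v x1"
    show ?thesis
    proof (intro exI[of _ "x1 + k *\<^sub>R a"] ballI)
      fix \<phi> assume \<phi>S: "\<phi> \<in> S"
      define \<psi> where "\<psi> = \<phi> - (blinfun_apply \<phi> a) *\<^sub>R v"
      have "\<psi> \<in> S" using \<phi>S vS insert.prems(1) \<psi>_def by (simp add: subspace_diff subspace_scale)
      moreover have "blinfun_apply \<psi> a = 0" using va \<psi>_def by (simp add: blinfun.diff_left blinfun.scaleR_left)
      ultimately have "\<psi> \<in> S'" using S'_def by simp
      hence "h \<psi> = blinfun_apply \<psi> x1" using x1 by blast
      hence "h \<phi> - blinfun_apply \<phi> a * h v = blinfun_apply \<phi> x1 - blinfun_apply \<phi> a * blinfun_apply v x1"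
        unfolding \<psi>_def using linear_diff[OF lin] linear_scale[OF lin]
        by (simp add: blinfun.diff_left blinfun.scaleR_left)
      moreover have e: "blinfun_apply \<phi> (x1 + k *\<^sub>R a) = blinfun_apply \<phi> x1 + k * blinfun_apply \<phi> a"
        by (simp add: blinfun.add_right blinfun.scaleR_right)
      ultimately show "h \<phi> = blinfun_apply \<phi> (x1 + k *\<^sub>R a)"
        unfolding e k_def by (simp add: algebra_simps)
    qed
  qed
qed

lemma gen_nbhd:
  assumes "generate_topology_on S U"
    and "S = {{\<phi>::'a::real_normed_vector \<Rightarrow>\<^sub>L real. blinfun_apply \<phi> x \<in> V} | x V. open (V::real set)}"
  shows "\<phi>0 \<in> U \<Longrightarrow> \<exists>F e. finite F \<and> e > 0 \<and>
     (\<forall>\<phi>. (\<forall>x\<in>F. \<bar>blinfun_apply \<phi> x - blinfun_apply \<phi>0 x\<bar> < e) \<longrightarrow> \<phi> \<in> U)"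
  using assms(1)
proof (induction rule: generate_topology_on.induct)
  case Empty thus ?case by simp
next
  case (Int a b)
  then obtain F1 e1 F2 e2 where 1: "finite F1" "e1 > 0"
      "\<forall>\<phi>. (\<forall>x\<in>F1. \<bar>blinfun_apply \<phi> x - blinfun_apply \<phi>0 x\<bar> < e1) \<longrightarrow> \<phi> \<in> a"
    and 2: "finite F2" "e2 > 0"
      "\<forall>\<phi>. (\<forall>x\<in>F2. \<bar>blinfun_apply \<phi> x - blinfun_apply \<phi>0 x\<bar> < e2) \<longrightarrow> \<phi> \<in> b"
    by auto
  show ?case
    by (rule exI[of _ "F1 \<union> F2"], rule exI[of _ "min e1 e2"]) (use 1 2 in auto)
next
  case (UN K)
  then obtain k where "k \<in> K" "\<phi>0 \<in> k" by auto
  with UN.IH[of k] show ?case by blast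
next
  case (Basis s)
  then obtain x V where s: "s = {\<phi>. blinfun_apply \<phi> x \<in> V}" and V: "open V" using assms(2) by auto
  have "blinfun_apply \<phi>0 x \<in> V" using Basis.prems s by auto
  then obtain e where e: "e > 0" "\<forall>y. dist y (blinfun_apply \<phi>0 x) < e \<longrightarrow> y \<in> V"
    using V open_dist by blast
  show ?case
    by (rule exI[of _ "{x}"], rule exI[of _ e]) (use e s in \<open>auto simp: dist_real_def\<close>)
qed

lemma weak_star_eval:
  fixes h :: "('a::real_normed_vector \<Rightarrow>\<^sub>L real) \<Rightarrow>\<^sub>L real"
  assumes "weak_star_continuous h"
  shows "\<exists>x0. \<forall>\<phi>. blinfun_apply h \<phi> = blinfun_apply \<phi> x0"
proof -
  define S where "S = {{\<phi>::'a \<Rightarrow>\<^sub>L real. blinfun_apply \<phi> x \<in> V} | x V. open (V::real set)}"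
  have wt: "weak_star_topology = topology_generated_by S" unfolding weak_star_topology_def S_def ..
  define U where "U = {\<phi> \<in> topspace weak_star_topology. blinfun_apply h \<phi> \<in> {-1<..<1::real}}"
  have "openin weak_star_topology U"
    using assms unfolding weak_star_continuous_def continuous_map_def U_def
    by (metis open_greaterThanLessThan open_openin)
  hence gU: "generate_topology_on S U" using wt openin_topology_generated_by_iff by metis
  have "{\<phi>::'a \<Rightarrow>\<^sub>L real. blinfun_apply \<phi> 0 \<in> UNIV} \<in> S" unfolding S_def by blast
  hence "0 \<in> \<Union>S" by blast
  hence "(0::'a \<Rightarrow>\<^sub>L real) \<in> topspace weak_star_topology" by (simp add: wt topology_generated_by_topspace)
  hence "0 \<in> U" unfolding U_def by simp
  from gen_nbhd[OF gU S_def this] obtain F e where Fe: "finite F" "e > 0"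
    "\<forall>\<phi>. (\<forall>x\<in>F. \<bar>blinfun_apply \<phi> x\<bar> < e) \<longrightarrow> \<phi> \<in> U" by auto
  have ker: "\<forall>\<phi>\<in>UNIV. (\<forall>x\<in>F. blinfun_apply \<phi> x = 0) \<longrightarrow> blinfun_apply h \<phi> = 0"
  proof (intro ballI impI)
    fix \<phi> :: "'a \<Rightarrow>\<^sub>L real" assume z: "\<forall>x\<in>F. blinfun_apply \<phi> x = 0"
    show "blinfun_apply h \<phi> = 0"
    proof (rule ccontr)
      assume nz: "blinfun_apply h \<phi> \<noteq> 0"
      define n where "n = 2 / \<bar>blinfun_apply h \<phi>\<bar>"
      have "\<forall>x\<in>F. \<bar>blinfun_apply (n *\<^sub>R \<phi>) x\<bar> < e" using z Fe(2) by (simp add: blinfun.scaleR_left)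
      hence "n *\<^sub>R \<phi> \<in> U" using Fe(3) by blast
      hence "\<bar>blinfun_apply h (n *\<^sub>R \<phi>)\<bar> < 1" unfolding U_def by auto
      moreover have "\<bar>blinfun_apply h (n *\<^sub>R \<phi>)\<bar> = 2"
        using nz unfolding n_def by (simp add: blinfun.scaleR_right abs_mult)
      ultimately show False by simp
    qed
  qed
  have lin: "linear (blinfun_apply h)" by (simp add: blinfun.bounded_linear_right bounded_linear.linear)
  from ev_span[OF lin Fe(1) subspace_UNIV ker] show ?thesis by blast
qed

definition evb :: "'a::real_normed_vector \<Rightarrow> (('a \<Rightarrow>\<^sub>L real) \<Rightarrow>\<^sub>L real)" where
  "evb w = Blinfun (\<lambda>\<phi>. blinfun_apply \<phi> w)"

lemma evb_apply [simp]: "blinfun_apply (evb w) \<phi> = blinfun_apply \<phi> w"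
proof -
  have "blinfun_apply (Blinfun (\<lambda>\<phi>. blinfun_apply \<phi> w)) = (\<lambda>\<phi>. blinfun_apply \<phi> w)"
    by (rule bounded_linear_Blinfun_apply[OF blinfun.bounded_linear_left])
  thus ?thesis unfolding evb_def by (subst \<open>blinfun_apply _ = _\<close>) (rule refl)
qed

lemma evb_norm: "norm (evb w) \<le> norm w"
  by (rule norm_blinfun_bound) (auto, metis norm_blinfun real_norm_def mult.commute)

lemma evb_add: "evb (a + b) = evb a + evb b"
  by (rule blinfun_eqI) (simp add: blinfun.add_right blinfun.add_left)

lemma evb_scale: "evb (c *\<^sub>R a) = c *\<^sub>R evb a"
  by (rule blinfun_eqI) (simp add: blinfun.scaleR_right blinfun.scaleR_left)

lemma evb_zero: "evb 0 = 0"
  by (rule blinfun_eqI) simp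

theorem theorem4p1:
  fixes f g0 :: "('a::banach \<Rightarrow>\<^sub>L real) \<Rightarrow>\<^sub>L real"
    and Y :: "(('a \<Rightarrow>\<^sub>L real) \<Rightarrow>\<^sub>L real) set"
  assumes "weak_star_continuous f"
    and "subspace Y"
    and "\<forall>g\<in>Y. weak_star_continuous g"
    and "f \<notin> Y"
    and "g0 \<in> Y"
  shows "best_approximation f Y g0 \<longleftrightarrow>
    (\<forall>Z. subspace Z \<and> (\<exists>B. finite B \<and> span B = Z) \<and> Z \<subseteq> Y \<and> g0 \<in> Z \<longrightarrow>
        (\<Inter>g\<in>Z. null_space g) \<inter> norming_set (f - g0) \<noteq> {})"
proof
  assume ba: "best_approximation f Y g0"
  have lowb: "norm (f - g0) \<le> norm (f - g)" if "g \<in> Y" for g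
  proof -
    have "norm (f - g0) = Inf {norm (f - g) | g. g \<in> Y}" using ba unfolding best_approximation_def by simp
    also have "\<dots> \<le> norm (f - g)"
      by (rule cInf_lower) (use that in \<open>auto intro: bdd_belowI[of _ 0]\<close>)
    finally show ?thesis .
  qed
  obtain x0 where fx0: "\<forall>\<phi>. blinfun_apply f \<phi> = blinfun_apply \<phi> x0"
    using weak_star_eval[OF assms(1)] by blast
  have fev: "f = evb x0" by (rule blinfun_eqI) (simp add: fx0)
  have Yev: "\<exists>w. g = evb w" if "g \<in> Y" for g
  proof -
    have "weak_star_continuous g" using assms(3) that by blast
    from weak_star_eval[OF this] obtain w where "\<forall>\<phi>. blinfun_apply g \<phi> = blinfun_apply \<phi> w"
      by blast
    hence "g = evb w" by (intro blinfun_eqI) simp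
    thus ?thesis by blast
  qed
  define d where "d = norm (f - g0)"
  have "f \<noteq> g0" using assms(4,5) by auto
  hence dpos: "d > 0" unfolding d_def by simp
  show "\<forall>Z. subspace Z \<and> (\<exists>B. finite B \<and> span B = Z) \<and> Z \<subseteq> Y \<and> g0 \<in> Z \<longrightarrow>
        (\<Inter>g\<in>Z. null_space g) \<inter> norming_set (f - g0) \<noteq> {}"
  proof (intro allI impI)
    fix Z :: "(('a \<Rightarrow>\<^sub>L real) \<Rightarrow>\<^sub>L real) set"
    assume "subspace Z \<and> (\<exists>B. finite B \<and> span B = Z) \<and> Z \<subseteq> Y \<and> g0 \<in> Z"
    hence Zs: "subspace Z" and ZY: "Z \<subseteq> Y" and g0Z: "g0 \<in> Z" by auto
    define W where "W = {w. evb w \<in> Z}"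
    have Wsub: "subspace W" unfolding subspace_def W_def
      using Zs by (simp add: evb_add evb_scale evb_zero subspace_0 subspace_add subspace_scale)
    have Zev: "\<exists>w\<in>W. g = evb w" if "g \<in> Z" for g
      using Yev[of g] that ZY W_def by auto
    have distW: "d \<le> norm (x0 - w)" if "w \<in> W" for w
    proof -
      have "evb w \<in> Y" using that W_def ZY by auto
      hence "d \<le> norm (f - evb w)" using lowb d_def by simp
      also have "f - evb w = evb (x0 - w)"
        by (rule blinfun_eqI) (simp add: fev blinfun.diff_left blinfun.diff_right)
      finally show ?thesis using evb_norm[of "x0 - w"] by simp
    qed
    define G0 where "G0 = {(w + t *\<^sub>R x0, t * d) | w t. w \<in> W}"
    have G0sub: "subspace G0" unfolding subspace_def
    proof (intro conjI ballI allI)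
      show "0 \<in> G0" unfolding G0_def using subspace_0[OF Wsub]
        by (auto simp: zero_prod_def intro!: exI[of _ 0])
    next
      fix a b assume "a \<in> G0" "b \<in> G0"
      then obtain w t w' t' where a: "a = (w + t *\<^sub>R x0, t * d)" "w \<in> W"
        and b: "b = (w' + t' *\<^sub>R x0, t' * d)" "w' \<in> W" unfolding G0_def by blast
      have "a + b = ((w + w') + (t + t') *\<^sub>R x0, (t + t') * d)" using a b
        by (simp add: algebra_simps scaleR_add_left)
      moreover have "w + w' \<in> W" using subspace_add[OF Wsub a(2) b(2)] .
      ultimately show "a + b \<in> G0" unfolding G0_def by blast
    next
      fix c :: real and a assume "a \<in> G0"
      then obtain w t where a: "a = (w + t *\<^sub>R x0, t * d)" "w \<in> W" unfolding G0_def by blast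
      have "c *\<^sub>R a = (c *\<^sub>R w + (c * t) *\<^sub>R x0, (c * t) * d)" using a by (simp add: algebra_simps)
      moreover have "c *\<^sub>R w \<in> W" using subspace_scale[OF Wsub a(2)] .
      ultimately show "c *\<^sub>R a \<in> G0" unfolding G0_def by blast
    qed
    have x0W: "x0 \<notin> W" using distW dpos by force
    have G0fun: "\<forall>x y z. (x,y)\<in>G0 \<longrightarrow> (x,z)\<in>G0 \<longrightarrow> y = z"
    proof (intro allI impI)
      fix x y z assume "(x,y)\<in>G0" "(x,z)\<in>G0"
      then obtain w t w' t' where a: "x = w + t *\<^sub>R x0" "y = t * d" "w \<in> W"
        and b: "x = w' + t' *\<^sub>R x0" "z = t' * d" "w' \<in> W" unfolding G0_def by blast
      have "t = t'"
      proof (rule ccontr)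
        assume ne: "t \<noteq> t'"
        have h: "(t - t') *\<^sub>R x0 = w' - w" using a(1) b(1) by (simp add: algebra_simps)
        have "x0 = (1 / (t - t')) *\<^sub>R ((t - t') *\<^sub>R x0)" using ne by simp
        also have "\<dots> = (1 / (t - t')) *\<^sub>R (w' - w)" using h by simp
        finally have "x0 = (1 / (t - t')) *\<^sub>R (w' - w)" .
        moreover have "(1 / (t - t')) *\<^sub>R (w' - w) \<in> W"
          using Wsub a(3) b(3) by (simp add: subspace_scale subspace_diff)
        ultimately show False using x0W by simp
      qed
      thus "y = z" using a b by simp
    qed
    have G0bd: "\<forall>(x,y)\<in>G0. y \<le> 1 * norm x"
    proof (clarify)
      fix x y assume "(x,y) \<in> G0"
      then obtain w t where a: "x = w + t *\<^sub>R x0" "y = t * d" "w \<in> W" unfolding G0_def by blast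
      show "y \<le> 1 * norm x"
      proof (cases "t = 0")
        case True thus ?thesis using a by simp
      next
        case False
        have "(- (1/t)) *\<^sub>R w \<in> W" using subspace_scale[OF Wsub a(3)] by blast
        hence "d \<le> norm (x0 - (- (1/t)) *\<^sub>R w)" using distW by blast
        hence "\<bar>t\<bar> * d \<le> \<bar>t\<bar> * norm (x0 - (- (1/t)) *\<^sub>R w)" by (simp add: mult_left_mono)
        also have "\<bar>t\<bar> * norm (x0 - (- (1/t)) *\<^sub>R w) = norm (t *\<^sub>R (x0 - (- (1/t)) *\<^sub>R w))" by simp
        also have "t *\<^sub>R (x0 - (- (1/t)) *\<^sub>R w) = x" using a False by (simp add: algebra_simps)
        finally have "\<bar>t\<bar> * d \<le> norm x" .
        moreover have "t * d \<le> \<bar>t\<bar> * d" using dpos by (simp add: mult_right_mono)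
        ultimately show ?thesis using a by simp
      qed
    qed
    obtain F :: "'a \<Rightarrow>\<^sub>L real" where F: "\<forall>(x,y)\<in>G0. blinfun_apply F x = y" and nF: "norm F \<le> 1"
      using hb_graph[OF G0sub G0fun G0bd] by auto
    have FW: "blinfun_apply F w = 0" if "w \<in> W" for w
    proof -
      have "(w + 0 *\<^sub>R x0, 0 * d) \<in> G0" unfolding G0_def using that by blast
      thus ?thesis using F by auto
    qed
    have Fx0: "blinfun_apply F x0 = d"
    proof -
      have "(0 + 1 *\<^sub>R x0, 1 * d) \<in> G0" unfolding G0_def using subspace_0[OF Wsub] by blast
      thus ?thesis using F by auto
    qed
    have Fnull: "F \<in> (\<Inter>g\<in>Z. null_space g)"
    proof
      fix g assume "g \<in> Z"
      then obtain w where "w \<in> W" "g = evb w" using Zev by blast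
      thus "F \<in> null_space g" unfolding null_space_def using FW by simp
    qed
    have g0F: "blinfun_apply g0 F = 0" using Fnull g0Z unfolding null_space_def by auto
    have val: "blinfun_apply (f - g0) F = d"
      using g0F Fx0 fx0 by (simp add: blinfun.diff_left)
    have "d \<le> d * norm F"
    proof -
      have "d = \<bar>blinfun_apply (f - g0) F\<bar>" using val dpos by simp
      also have "\<dots> \<le> norm (f - g0) * norm F" using norm_blinfun[of "f - g0" F] by simp
      finally show ?thesis using d_def by simp
    qed
    hence "norm F = 1" using nF dpos by simp
    hence "F \<in> norming_set (f - g0)" unfolding norming_set_def using val d_def dpos by simp
    with Fnull show "(\<Inter>g\<in>Z. null_space g) \<inter> norming_set (f - g0) \<noteq> {}" by blast
  qed
next
  assume H: "\<forall>Z. subspace Z \<and> (\<exists>B. finite B \<and> span B = Z) \<and> Z \<subseteq> Y \<and> g0 \<in> Z \<longrightarrow>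
        (\<Inter>g\<in>Z. null_space g) \<inter> norming_set (f - g0) \<noteq> {}"
  have le: "norm (f - g0) \<le> norm (f - g)" if gY: "g \<in> Y" for g
  proof -
    define Z where "Z = span {g0, g}"
    have "subspace Z" unfolding Z_def by (rule subspace_span)
    moreover have "\<exists>B. finite B \<and> span B = Z" unfolding Z_def by (intro exI[of _ "{g0, g}"]) simp
    moreover have "Z \<subseteq> Y" unfolding Z_def using span_minimal[OF _ assms(2)] assms(5) gY by auto
    moreover have "g0 \<in> Z" unfolding Z_def by (simp add: span_base)
    ultimately obtain \<phi> where \<phi>: "\<phi> \<in> (\<Inter>g\<in>Z. null_space g)" "\<phi> \<in> norming_set (f - g0)"
      using H by blast
    have gZ: "g \<in> Z" unfolding Z_def by (simp add: span_base)
    have "blinfun_apply g \<phi> = 0" "blinfun_apply g0 \<phi> = 0"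
      using \<phi>(1) gZ \<open>g0 \<in> Z\<close> unfolding null_space_def by auto
    moreover have "norm \<phi> = 1" "\<bar>blinfun_apply (f - g0) \<phi>\<bar> = norm (f - g0)"
      using \<phi>(2) unfolding norming_set_def by auto
    ultimately have "norm (f - g0) = \<bar>blinfun_apply (f - g) \<phi>\<bar>" by (simp add: blinfun.diff_left)
    also have "\<dots> \<le> norm (f - g) * norm \<phi>" by (rule norm_blinfun[of "f - g" \<phi>, simplified])
    finally show ?thesis using \<open>norm \<phi> = 1\<close> by simp
  qed
  have "Inf {norm (f - g) | g. g \<in> Y} = norm (f - g0)"
    by (rule cInf_eq_minimum) (use assms(5) le in auto)
  thus "best_approximation f Y g0" unfolding best_approximation_def using assms(5) by simp
qed

end
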